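(* For every integer $p\ge1$, $$B_{2p}=-\frac{(2p)!}{2^{2p}-2}\det U_p,\qquad E_{2p}=(2p)!\det V_p,$$ where $U_p$ and $V_p$ are $(p+1)\times(p+1)$ matrices (rows and columns indexed $0,\dots,p$) whose last column is $(1,0,\dots,0)^T$ and whose first $p$ columns are given, for $0\le j\le p-1$, by $(U_p)_{ij}=1/(2(i-j)+1)!$ and $(V_p)_{ij}=1/(2(i-j))!$ when $i\ge j$, and $(U_p)_{ij}=(V_p)_{ij}=0$ when $i<j$.
   Context: The Bernoulli numbers are defined by $\sum_{n\ge0}B_nz^n/n!=z/(e^z-1)$, and the Euler numbers by $\sum_{n\ge0}E_nz^n/n!=1/\cosh z$. *)

theory Defs
  imports "HOL-Computational_Algebra.Formal_Power_Series" "Jordan_Normal_Form.Determinant"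
begin

definition bernoulli_num :: "nat \<Rightarrow> real" where
  "bernoulli_num n = fact n * fps_nth (fps_X / (fps_exp 1 - 1)) n"

definition fps_cosh_real :: "real fps" where
  "fps_cosh_real = fps_const (1/2) * (fps_exp 1 + fps_exp (-1))"

definition euler_num :: "nat \<Rightarrow> real" where
  "euler_num n = fact n * fps_nth (inverse fps_cosh_real) n"

definition U_mat :: "nat \<Rightarrow> real mat" where
  "U_mat p = mat (p+1) (p+1) (\<lambda>(i,j).
     if j = p then (if i = 0 then 1 else 0)
     else if j \<le> i then 1 / fact (2*(i-j)+1) else 0)"

definition V_mat :: "nat \<Rightarrow> real mat" where
  "V_mat p = mat (p+1) (p+1) (\<lambda>(i,j).
     if j = p then (if i = 0 then 1 else 0)
     else if j \<le> i then 1 / fact (2*(i-j)) else 0)"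

end

theory Submission
  imports Defs
begin


lemma sum_even_only:
  fixes h :: "nat \<Rightarrow> real"
  assumes "\<And>m. odd m \<Longrightarrow> m < 2*N \<Longrightarrow> h m = 0" and "i \<le> N"
  shows "(\<Sum>m=0..2*i. h m) = (\<Sum>j=0..i. h (2*j))"
  using assms(2)
proof (induction i)
  case 0 then show ?case by simp
next
  case (Suc i)
  have "(\<Sum>m=0..2*Suc i. h m) = (\<Sum>m=0..2*i. h m) + h (2*i+1) + h (2*i+2)"
    by (simp add: numeral_2_eq_2)
  also have "h (2*i+1) = 0" using assms(1) Suc.prems by simp
  finally show ?case using Suc.IH Suc.prems by (simp add: numeral_2_eq_2)
qed

lemma conv_from_inverse:
  fixes c :: "nat \<Rightarrow> real"
  assumes c0: "c 0 = 1" and codd: "\<And>n. odd n \<Longrightarrow> c n = 0"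
  shows "(\<Sum>j=0..i. c (2*(i-j)) * fps_nth (inverse (Abs_fps c)) (2*j)) = (if i = 0 then 1 else 0)"
proof -
  let ?F = "Abs_fps c"
  have "inverse ?F * ?F = 1" using c0 by (intro inverse_mult_eq_1) simp
  hence "fps_nth (inverse ?F * ?F) (2*i) = (if i = 0 then 1 else 0)" by simp
  moreover have "fps_nth (inverse ?F * ?F) (2*i) = (\<Sum>m=0..2*i. fps_nth (inverse ?F) m * c (2*i - m))"
    by (simp add: fps_mult_nth)
  moreover have "\<dots> = (\<Sum>j=0..i. fps_nth (inverse ?F) (2*j) * c (2*i - 2*j))"
    by (rule sum_even_only[where N=i]) (auto intro: codd)
  ultimately show ?thesis
    by (simp add: diff_mult_distrib mult_ac)
qed

definition Wm :: "(nat \<Rightarrow> real) \<Rightarrow> nat \<Rightarrow> real mat" where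
  "Wm a p = mat (p+1) (p+1) (\<lambda>(i,j).
     if j = p then (if i = 0 then 1 else 0)
     else if j \<le> i then a (i-j) else 0)"

lemma det_Wm:
  assumes a0: "a 0 = 1"
    and conv: "\<And>i. i \<le> p \<Longrightarrow> (\<Sum>j=0..i. a (i-j) * b j) = (if i = 0 then 1 else 0)"
  shows "det (Wm a p) = b p"
proof -
  define n where "n = p+1"
  define T where "T = mat n n (\<lambda>(i,j). if j \<le> i then a (i-j) else 0)"
  define C where "C = mat n n (\<lambda>(i,j). if j = p then b i else if i = j then 1 else (0::real))"
  have TC: "T \<in> carrier_mat n n" "C \<in> carrier_mat n n" unfolding T_def C_def by auto
  have eq: "Wm a p = T * C"
  proof (rule eq_matI)
    fix i j assume i: "i < dim_row (T*C)" and j: "j < dim_col (T*C)"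
    hence i': "i < n" and j': "j < n" using TC by auto
    have "(T*C) $$ (i,j) = (\<Sum>k=0..<n. T $$ (i,k) * C $$ (k,j))"
      using i' j' TC by (simp add: scalar_prod_def)
    also have "\<dots> = Wm a p $$ (i,j)"
    proof (cases "j = p")
      case True
      have "(\<Sum>k=0..<n. T $$ (i,k) * C $$ (k,j)) = (\<Sum>k=0..<n. if k \<le> i then a (i-k) * b k else 0)"
        using True i' by (intro sum.cong) (auto simp: T_def C_def n_def)
      also have "\<dots> = (\<Sum>k\<in>{0..i}. a (i-k) * b k)"
        using i' by (subst sum.If_cases) (auto intro!: sum.cong simp: n_def)
      also have "\<dots> = (if i = 0 then 1 else 0)" using conv i' n_def by simp
      finally show ?thesis using True i' j' by (simp add: Wm_def n_def)
    next
      case False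
      have "(\<Sum>k=0..<n. T $$ (i,k) * C $$ (k,j)) = (\<Sum>k=0..<n. if k = j then T $$ (i,j) else 0)"
        using False i' j' by (intro sum.cong) (auto simp: C_def)
      also have "\<dots> = T $$ (i,j)" using j' by simp
      finally show ?thesis using False i' j' by (simp add: Wm_def T_def n_def)
    qed
    finally show "Wm a p $$ (i,j) = (T*C) $$ (i,j)" by simp
  qed (use TC in \<open>auto simp: Wm_def n_def\<close>)
  have dT: "det T = 1"
  proof -
    have "det T = prod_list (diag_mat T)"
      by (rule det_lower_triangular[OF _ TC(1)]) (auto simp: T_def)
    also have "\<dots> = 1" unfolding prod_list_diag_prod using TC by (simp add: T_def a0)
    finally show ?thesis .
  qed
  have dC: "det C = b p"
  proof -
    have "det C = prod_list (diag_mat C)"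
      by (rule det_upper_triangular[OF _ TC(2)]) (auto simp: C_def upper_triangular_def n_def)
    also have "\<dots> = (\<Prod>i=0..<n. if i = p then b p else 1)"
      unfolding prod_list_diag_prod using TC by (intro prod.cong) (auto simp: C_def)
    also have "\<dots> = b p" by (simp add: n_def)
    finally show ?thesis .
  qed
  show ?thesis using eq det_mult[OF TC] dT dC by simp
qed



definition fscale :: "real \<Rightarrow> real fps \<Rightarrow> real fps" where
  "fscale c f = Abs_fps (\<lambda>n. c^n * fps_nth f n)"

lemma fscale_mult: "fscale c (f*g) = fscale c f * fscale c g"
proof (rule fps_ext)
  fix n
  have "fps_nth (fscale c (f*g)) n = (\<Sum>i=0..n. c^n * (fps_nth f i * fps_nth g (n-i)))"
    by (simp add: fscale_def fps_mult_nth sum_distrib_left)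
  also have "\<dots> = (\<Sum>i=0..n. (c^i * fps_nth f i) * (c^(n-i) * fps_nth g (n-i)))"
  proof (intro sum.cong refl)
    fix i assume "i \<in> {0..n}"
    hence "c^n = c^i * c^(n-i)" by (simp add: power_add[symmetric])
    thus "c^n * (fps_nth f i * fps_nth g (n-i)) = (c^i * fps_nth f i) * (c^(n-i) * fps_nth g (n-i))"
      by simp
  qed
  also have "\<dots> = fps_nth (fscale c f * fscale c g) n"
    by (simp add: fscale_def fps_mult_nth)
  finally show "fps_nth (fscale c (f*g)) n = fps_nth (fscale c f * fscale c g) n" .
qed

lemma fscale_diff: "fscale c (f - g) = fscale c f - fscale c g"
  by (rule fps_ext) (simp add: fscale_def algebra_simps)

lemma fscale_one: "fscale c 1 = 1"
  by (rule fps_ext) (simp add: fscale_def)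

lemma fscale_X: "fscale c fps_X = fps_const c * fps_X"
  by (rule fps_ext) (simp add: fscale_def fps_X_def)

lemma fscale_exp: "fscale 2 (fps_exp 1) = fps_exp 2"
  by (rule fps_ext) (simp add: fscale_def)

definition cU :: "nat \<Rightarrow> real" where
  "cU n = (if even n then 1 / fact (n+1) else 0)"

definition cV :: "nat \<Rightarrow> real" where
  "cV n = (if even n then 1 / fact n else 0)"

lemma cosh_eq: "fps_cosh_real = Abs_fps cV"
proof (rule fps_ext)
  fix n
  show "fps_nth fps_cosh_real n = fps_nth (Abs_fps cV) n"
    by (cases "even n") (simp_all add: fps_cosh_real_def cV_def)
qed

lemma inverse_U:
  "inverse (Abs_fps cU) = fps_const 2 * (fps_X / (fps_exp 1 - 1)) - fscale 2 (fps_X / (fps_exp 1 - 1))"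
proof -
  define E :: "real fps" where "E = fps_exp 1"
  define Em :: "real fps" where "Em = fps_exp (-1)"
  define X :: "real fps" where "X = fps_X"
  define F where "F = Abs_fps cU"
  define \<beta> where "\<beta> = X / (E - 1)"
  define K where "K = fps_const 2 * \<beta> - fscale 2 \<beta>"
  have nz: "E - 1 \<noteq> 0"
  proof
    assume "E - 1 = 0"
    hence "fps_nth (E - 1) 1 = 0" by simp
    thus False by (simp add: E_def)
  qed
  have sd: "subdegree (E - 1) \<le> subdegree X"
  proof -
    have "subdegree (E - 1) \<le> 1" by (rule subdegree_leI) (simp add: E_def)
    thus ?thesis by (simp add: X_def)
  qed
  have h1: "\<beta> * (E - 1) = X" unfolding \<beta>_def by (rule fps_times_divide_eq[OF nz sd])
  have EE: "fps_exp 2 = E * E" unfolding E_def using fps_exp_add_mult[of "1::real" 1] by simp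
  have h2: "fscale 2 \<beta> * (E*E - 1) = fps_const 2 * X"
  proof -
    have "fscale 2 (\<beta> * (E - 1)) = fscale 2 X" using h1 by simp
    thus ?thesis by (simp add: fscale_mult fscale_diff fscale_one fscale_X fscale_exp E_def X_def EE)
  qed
  have h3: "fps_const 2 * (X * F) = E - Em"
  proof (rule fps_ext)
    fix n
    show "fps_nth (fps_const 2 * (X * F)) n = fps_nth (E - Em) n"
    proof (cases n)
      case 0 then show ?thesis by (simp add: X_def E_def Em_def)
    next
      case (Suc m)
      then show ?thesis
        by (cases "even m") (simp_all add: X_def E_def Em_def F_def cU_def diff_divide_distrib[symmetric] distrib_right)
    qed
  qed
  have h4: "Em * E = 1" unfolding Em_def E_def using fps_exp_add_mult[of "-1::real" 1] by simp
  have a: "K * (E*E - 1) = fps_const 2 * X * E"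
  proof -
    have "K * (E*E - 1) = fps_const 2 * (\<beta> * (E - 1)) * (E + 1) - fscale 2 \<beta> * (E*E - 1)"
      unfolding K_def by (simp add: algebra_simps)
    also have "\<dots> = fps_const 2 * X * (E + 1) - fps_const 2 * X" using h1 h2 by simp
    also have "\<dots> = fps_const 2 * X * E" by (simp add: algebra_simps)
    finally show ?thesis .
  qed
  have b: "E*E - 1 = E * (fps_const 2 * (X * F))"
  proof -
    have "E*E - 1 = E*E - E*Em" using h4 by (simp add: mult.commute)
    also have "\<dots> = E*(E - Em)" by (simp add: right_diff_distrib)
    finally show ?thesis using h3 by simp
  qed
  have "K * (E * (fps_const 2 * (X*F))) = fps_const 2 * X * E" using a b by simp
  then have "(fps_const 2 * X * E) * (F*K) = fps_const 2 * X * E" by (simp add: mult_ac)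
  then have c: "(fps_const 2 * X * E) * (F * K - 1) = 0"
    by (simp add: right_diff_distrib)
  have d1: "fps_nth (fps_const 2 * X * E) 1 = 2"
    by (simp add: X_def E_def fps_mult_nth mult.assoc)
  have d: "fps_const 2 * X * E \<noteq> 0"
    using d1 by auto
  have "F * K = 1" using c d by simp
  hence "inverse F = K" by (rule fps_inverse_unique)
  thus ?thesis by (simp add: F_def K_def \<beta>_def X_def E_def)
qed

theorem mainTheorem7:
  fixes p :: nat
  assumes "p \<ge> 1"
  shows "bernoulli_num (2*p) = - (fact (2*p) / (2^(2*p) - 2)) * det (U_mat p)
       \<and> euler_num (2*p) = fact (2*p) * det (V_mat p)"
proof
  define \<beta> :: "real fps" where "\<beta> = fps_X / (fps_exp 1 - 1)"
  have UW: "U_mat p = Wm (\<lambda>k. cU (2*k)) p"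
    by (rule eq_matI) (auto simp: U_mat_def Wm_def cU_def)
  have dU: "det (U_mat p) = fps_nth (inverse (Abs_fps cU)) (2*p)"
    unfolding UW
    by (rule det_Wm[where b = "\<lambda>j. fps_nth (inverse (Abs_fps cU)) (2*j)"])
       (simp add: cU_def, rule conv_from_inverse, auto simp: cU_def)
  have hb: "fps_nth (inverse (Abs_fps cU)) (2*p) = (2 - 2^(2*p)) * fps_nth \<beta> (2*p)"
    unfolding inverse_U \<beta>_def[symmetric] by (simp add: fscale_def algebra_simps)
  have nz: "(2::real)^(2*p) - 2 \<noteq> 0"
  proof -
    have "(2::real)^2 \<le> 2^(2*p)" using assms by (intro power_increasing) auto
    thus ?thesis by simp
  qed
  show "bernoulli_num (2*p) = - (fact (2*p) / (2^(2*p) - 2)) * det (U_mat p)"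
    unfolding dU hb bernoulli_num_def \<beta>_def[symmetric] using nz by (simp add: field_simps)
next
  have VW: "V_mat p = Wm (\<lambda>k. cV (2*k)) p"
    by (rule eq_matI) (auto simp: V_mat_def Wm_def cV_def)
  have dV: "det (V_mat p) = fps_nth (inverse (Abs_fps cV)) (2*p)"
    unfolding VW
    by (rule det_Wm[where b = "\<lambda>j. fps_nth (inverse (Abs_fps cV)) (2*j)"])
       (simp add: cV_def, rule conv_from_inverse, auto simp: cV_def)
  show "euler_num (2*p) = fact (2*p) * det (V_mat p)"
    unfolding dV euler_num_def cosh_eq ..
qed

end
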